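(* Let $(A,\cdot,[-,-])$ be a transposed Poisson algebra and $(\mu,\rho,V)$ a representation of it. Then $(-\mu^*,\rho^*,V^* )$ is a representation of $(A,\cdot,[-,-])$ if and only if $\mu([x,y])=0$ and $\rho(x\cdot y)=\mu(x)\rho(y)$ for all $x,y\in A$. In particular, $(-\mathcal{L}^*_{\cdot},\mathrm{ad}^*,A^* )$ is a representation of $(A,\cdot,[-,-])$ if and only if $[x,y\cdot z]=x\cdot[y,z]=0$ for all $x,y,z\in A$.
   Context: Finite-dimensional spaces, characteristic zero. $\mathcal{L}_\cdot(x)y=x\cdot y$, $\mathrm{ad}(x)y=[x,y]$. For linear $\rho:A\to\mathrm{End}(V)$, $\rho^*:A\to\mathrm{End}(V^* )$ is $\langle\rho^*(x)v^*,u\rangle=-\langle v^*,\rho(x)u\rangle$. Transposed Poisson algebra: $(A,\cdot)$ commutative associative, $(A,[-,-])$ Lie, $2z\cdot[x,y]=[z\cdot x,y]+[x,z\cdot y]$. A representation of a transposed Poisson algebra is $(\mu,\rho,V)$ with $\mu,\rho:A\to\mathrm{End}(V)$ linear, $\mu(x\cdot y)=\mu(x)\mu(y)$, $\rho([x,y])=\rho(x)\rho(y)-\rho(y)\rho(x)$, $2\mu(x)\rho(y)=\rho(x\cdot y)+\rho(y)\mu(x)$ and $2\mu([x,y])=\rho(x)\mu(y)-\rho(y)\mu(x)$ for all $x,y$. *)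

theory Defs
  imports Complex_Main "HOL-Library.Function_Algebras"
begin

definition transposed_poisson ::
  "('k::field \<Rightarrow> 'a::ab_group_add \<Rightarrow> 'a) \<Rightarrow> ('a \<Rightarrow> 'a \<Rightarrow> 'a) \<Rightarrow> ('a \<Rightarrow> 'a \<Rightarrow> 'a) \<Rightarrow> bool"
  where "transposed_poisson sA mult br \<longleftrightarrow>
    vector_space sA \<and>
    \<comment> \<open>bilinearity of both products\<close>
    (\<forall>c x y z. mult (sA c x + y) z = sA c (mult x z) + mult y z) \<and>
    (\<forall>c x y z. mult z (sA c x + y) = sA c (mult z x) + mult z y) \<and>
    (\<forall>c x y z. br (sA c x + y) z = sA c (br x z) + br y z) \<and>
    (\<forall>c x y z. br z (sA c x + y) = sA c (br z x) + br z y) \<and>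
    \<comment> \<open>commutative associative\<close>
    (\<forall>x y. mult x y = mult y x) \<and>
    (\<forall>x y z. mult (mult x y) z = mult x (mult y z)) \<and>
    \<comment> \<open>Lie algebra\<close>
    (\<forall>x. br x x = 0) \<and>
    (\<forall>x y z. br x (br y z) + br y (br z x) + br z (br x y) = 0) \<and>
    \<comment> \<open>compatibility\<close>
    (\<forall>x y z. sA 2 (mult z (br x y)) = br (mult z x) y + br x (mult z y))"

text \<open>A representation (mu, rho, W) of the transposed Poisson algebra on a subspace W
of the vector space given by scalar multiplication sV (W = UNIV for an ordinary space V;
W = the linear functionals for the dual space).\<close>

definition tp_rep ::
  "('k::field \<Rightarrow> 'a::ab_group_add \<Rightarrow> 'a) \<Rightarrow> ('a \<Rightarrow> 'a \<Rightarrow> 'a) \<Rightarrow> ('a \<Rightarrow> 'a \<Rightarrow> 'a) \<Rightarrow>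
   ('k \<Rightarrow> 'v::ab_group_add \<Rightarrow> 'v) \<Rightarrow> 'v set \<Rightarrow> ('a \<Rightarrow> 'v \<Rightarrow> 'v) \<Rightarrow> ('a \<Rightarrow> 'v \<Rightarrow> 'v) \<Rightarrow> bool"
  where "tp_rep sA mult br sV W mu rho \<longleftrightarrow>
    vector_space sV \<and> module.subspace sV W \<and>
    \<comment> \<open>mu x, rho x are endomorphisms of W\<close>
    (\<forall>x. \<forall>w\<in>W. mu x w \<in> W \<and> rho x w \<in> W) \<and>
    (\<forall>x c. \<forall>v\<in>W. \<forall>w\<in>W. mu x (sV c v + w) = sV c (mu x v) + mu x w) \<and>
    (\<forall>x c. \<forall>v\<in>W. \<forall>w\<in>W. rho x (sV c v + w) = sV c (rho x v) + rho x w) \<and>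
    \<comment> \<open>mu, rho are linear maps A \<rightarrow> End(W)\<close>
    (\<forall>c x y. \<forall>w\<in>W. mu (sA c x + y) w = sV c (mu x w) + mu y w) \<and>
    (\<forall>c x y. \<forall>w\<in>W. rho (sA c x + y) w = sV c (rho x w) + rho y w) \<and>
    \<comment> \<open>the four identities\<close>
    (\<forall>x y. \<forall>w\<in>W. mu (mult x y) w = mu x (mu y w)) \<and>
    (\<forall>x y. \<forall>w\<in>W. rho (br x y) w = rho x (rho y w) - rho y (rho x w)) \<and>
    (\<forall>x y. \<forall>w\<in>W. sV 2 (mu x (rho y w)) = rho (mult x y) w + rho y (mu x w)) \<and>
    (\<forall>x y. \<forall>w\<in>W. sV 2 (mu (br x y) w) = rho x (mu y w) - rho y (mu x w))"

definition dual_space :: "('k::field \<Rightarrow> 'v::ab_group_add \<Rightarrow> 'v) \<Rightarrow> ('v \<Rightarrow> 'k) set"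
  where "dual_space sV = {f. Vector_Spaces.linear sV (*) f}"

definition dual_scale :: "'k::field \<Rightarrow> ('v \<Rightarrow> 'k) \<Rightarrow> ('v \<Rightarrow> 'k)"
  where "dual_scale c f = (\<lambda>u. c * f u)"

definition dual_op :: "('a \<Rightarrow> 'v \<Rightarrow> 'v) \<Rightarrow> 'a \<Rightarrow> ('v \<Rightarrow> 'k::field) \<Rightarrow> ('v \<Rightarrow> 'k)"
  where "dual_op rho x f = (\<lambda>u. - f (rho x u))"

end

theory Submission imports Defs begin


lemma vs_dual: "vector_space (dual_scale :: 'k::field \<Rightarrow> ('v \<Rightarrow> 'k) \<Rightarrow> _)"
  by unfold_locales (auto simp: dual_scale_def algebra_simps fun_eq_iff)
lemma vs_self: "vector_space ((*) :: 'k::field \<Rightarrow> 'k \<Rightarrow> 'k)"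
  by unfold_locales (auto simp: algebra_simps)
lemma dual_space_iff: "vector_space sV \<Longrightarrow> f \<in> dual_space sV \<longleftrightarrow>
   (\<forall>x y. f (x+y) = f x + f y) \<and> (\<forall>c x. f (sV c x) = c * f x)"
  unfolding dual_space_def mem_Collect_eq by (simp add: Vector_Spaces.linear_iff vs_self)
lemma sub_dual: assumes "vector_space (sV :: 'k::field \<Rightarrow> 'v::ab_group_add \<Rightarrow> 'v)"
  shows "module.subspace dual_scale (dual_space sV)"
proof -
  have m: "module (dual_scale :: 'k \<Rightarrow> ('v \<Rightarrow> 'k) \<Rightarrow> _)" using vs_dual module_iff_vector_space by blast
  show ?thesis unfolding module.subspace_def[OF m]
    by (auto simp: dual_space_iff[OF assms] dual_scale_def algebra_simps)
qed
lemma sep: assumes "vector_space s" "\<And>f. Vector_Spaces.linear s (*) f \<Longrightarrow> f v = 0" shows "v = 0"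
proof -
  interpret vector_space s by fact
  let ?E = "extend_basis {}"
  have ind: "independent ?E" and sp: "span ?E = UNIV"
    using independent_extend_basis[OF independent_empty] span_extend_basis[OF independent_empty] by auto
  have "representation ?E v b = 0" for b
    using assms(2)[OF linear_representation[OF ind sp, of b]] .
  hence "{b. representation ?E v b \<noteq> 0} = {}" by auto
  with sum_nonzero_representation_eq[OF ind, of v] sp show ?thesis by auto
qed

lemma part1:
  fixes sA :: "'k::field_char_0 \<Rightarrow> 'a::ab_group_add \<Rightarrow> 'a"
    and mult br :: "'a \<Rightarrow> 'a \<Rightarrow> 'a"
    and sV :: "'k \<Rightarrow> 'v::ab_group_add \<Rightarrow> 'v"
    and mu rho :: "'a \<Rightarrow> 'v \<Rightarrow> 'v"
  assumes tpa: "transposed_poisson sA mult br"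
    and rep: "tp_rep sA mult br sV UNIV mu rho"
  shows "tp_rep sA mult br dual_scale (dual_space sV) (\<lambda>x f. - dual_op mu x f) (dual_op rho)
            \<longleftrightarrow> (\<forall>x y v. mu (br x y) v = 0) \<and> (\<forall>x y v. rho (mult x y) v = mu x (rho y v))"
proof -
  have vA: "vector_space sA" using tpa unfolding transposed_poisson_def by blast
  have vV: "vector_space sV" using rep unfolding tp_rep_def by blast
  interpret A: vector_space sA by fact
  interpret V: vector_space sV by fact
  have mcomm: "\<And>x y. mult x y = mult y x" using tpa unfolding transposed_poisson_def by blast
  have mlin: "\<And>x c v w. mu x (sV c v + w) = sV c (mu x v) + mu x w"
   and rlin: "\<And>x c v w. rho x (sV c v + w) = sV c (rho x v) + rho x w"
   and mlinA: "\<And>c x y w. mu (sA c x + y) w = sV c (mu x w) + mu y w"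
   and rlinA: "\<And>c x y w. rho (sA c x + y) w = sV c (rho x w) + rho y w"
   and r1: "\<And>x y w. mu (mult x y) w = mu x (mu y w)"
   and r2: "\<And>x y w. rho (br x y) w = rho x (rho y w) - rho y (rho x w)"
   and r3: "\<And>x y w. sV 2 (mu x (rho y w)) = rho (mult x y) w + rho y (mu x w)"
   and r4: "\<And>x y w. sV 2 (mu (br x y) w) = rho x (mu y w) - rho y (mu x w)"
    using rep unfolding tp_rep_def by auto
  have two: "\<And>v. sV 2 v = v + v"
    by (metis one_add_one V.scale_left_distrib V.scale_one)
  have madd: "\<And>x v w. mu x (v + w) = mu x v + mu x w" using mlin[of _ 1] by simp
  have radd: "\<And>x v w. rho x (v + w) = rho x v + rho x w" using rlin[of _ 1] by simp
  have mscale: "\<And>x c v. mu x (sV c v) = sV c (mu x v)"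
    using mlin[of _ _ _ 0] madd[of _ 0 0] by simp
  have rscale: "\<And>x c v. rho x (sV c v) = sV c (rho x v)"
    using rlin[of _ _ _ 0] radd[of _ 0 0] by simp
  have maddA: "\<And>x y w. mu (x + y) w = mu x w + mu y w" using mlinA[of 1] by simp
  have raddA: "\<And>x y w. rho (x + y) w = rho x w + rho y w" using rlinA[of 1] by simp
  have mscaleA: "\<And>c x w. mu (sA c x) w = sV c (mu x w)"
    using mlinA[of _ _ 0] maddA[of 0 0] by simp
  have rscaleA: "\<And>c x w. rho (sA c x) w = sV c (rho x w)"
    using rlinA[of _ _ 0] raddA[of 0 0] by simp
  let ?W = "dual_space sV"
  have Wiff: "\<And>f. f \<in> ?W \<longleftrightarrow> (\<forall>x y. f (x+y) = f x + f y) \<and> (\<forall>c x. f (sV c x) = c * f x)"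
    using dual_space_iff[OF vV] .
  have fadd: "\<And>f x y. f \<in> ?W \<Longrightarrow> f (x+y) = f x + f y" using Wiff by blast
  have fscale: "\<And>f c x. f \<in> ?W \<Longrightarrow> f (sV c x) = c * f x" using Wiff by blast
  have f0: "\<And>f. f \<in> ?W \<Longrightarrow> f 0 = 0" using fadd[of _ 0 0] by simp
  have fminus: "\<And>f x. f \<in> ?W \<Longrightarrow> f (- x) = - f x"
    using fadd[of _ x "- x" for x] f0 by (metis add.right_inverse add_eq_0_iff)
  have fdiff: "\<And>f x y. f \<in> ?W \<Longrightarrow> f (x - y) = f x - f y"
    using fadd fminus by (metis diff_conv_add_uminus)
  have F3: "\<forall>x. \<forall>w\<in>?W. (- dual_op mu x w) \<in> ?W \<and> dual_op rho x w \<in> ?W"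
    by (auto simp: Wiff dual_op_def madd radd mscale rscale)
  have F4: "\<forall>x c. \<forall>v\<in>?W. \<forall>w\<in>?W. (- dual_op mu x (dual_scale c v + w)) = dual_scale c (- dual_op mu x v) + (- dual_op mu x w)"
    by (auto simp: dual_op_def dual_scale_def fun_eq_iff)
  have F5: "\<forall>x c. \<forall>v\<in>?W. \<forall>w\<in>?W. dual_op rho x (dual_scale c v + w) = dual_scale c (dual_op rho x v) + dual_op rho x w"
    by (auto simp: dual_op_def dual_scale_def fun_eq_iff algebra_simps)
  have F6: "\<forall>c x y. \<forall>w\<in>?W. (- dual_op mu (sA c x + y) w) = dual_scale c (- dual_op mu x w) + (- dual_op mu y w)"
    by (auto simp: dual_op_def dual_scale_def fun_eq_iff mlinA fadd fscale)
  have F7: "\<forall>c x y. \<forall>w\<in>?W. dual_op rho (sA c x + y) w = dual_scale c (dual_op rho x w) + dual_op rho y w"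
    by (auto simp: dual_op_def dual_scale_def fun_eq_iff rlinA fadd fscale)
  have F8: "\<forall>x y. \<forall>w\<in>?W. (- dual_op mu (mult x y) w) = (- dual_op mu x (- dual_op mu y w))"
    proof (intro allI ballI ext)
    fix x y w u show "(- dual_op mu (mult x y) w) u = (- dual_op mu x (- dual_op mu y w)) u"
      using r1[of y x u] by (simp add: dual_op_def mcomm[of x y])
  qed
  have F9: "\<forall>x y. \<forall>w\<in>?W. dual_op rho (br x y) w = dual_op rho x (dual_op rho y w) - dual_op rho y (dual_op rho x w)"
    by (auto simp: dual_op_def fun_eq_iff r2 fdiff)
  have main: "tp_rep sA mult br dual_scale ?W (\<lambda>x f. - dual_op mu x f) (dual_op rho)
     \<longleftrightarrow> (\<forall>x y. \<forall>w\<in>?W. dual_scale 2 (- dual_op mu x (dual_op rho y w)) = dual_op rho (mult x y) w + dual_op rho y (- dual_op mu x w))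
       \<and> (\<forall>x y. \<forall>w\<in>?W. dual_scale 2 (- dual_op mu (br x y) w) = dual_op rho x (- dual_op mu y w) - dual_op rho y (- dual_op mu x w))"
    unfolding tp_rep_def using vs_dual sub_dual[OF vV] F3 F4 F5 F6 F7 F8 F9 by auto
  have G3: "(\<forall>x y. \<forall>w\<in>?W. dual_scale 2 (- dual_op mu x (dual_op rho y w)) = dual_op rho (mult x y) w + dual_op rho y (- dual_op mu x w))
     \<longleftrightarrow> (\<forall>x y u. \<forall>w\<in>?W. 2 * w (rho y (mu x u)) = w (rho (mult x y) u) + w (mu x (rho y u)))"
    by (auto simp: dual_op_def dual_scale_def fun_eq_iff algebra_simps)
  have G4: "(\<forall>x y. \<forall>w\<in>?W. dual_scale 2 (- dual_op mu (br x y) w) = dual_op rho x (- dual_op mu y w) - dual_op rho y (- dual_op mu x w))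
     \<longleftrightarrow> (\<forall>x y u. \<forall>w\<in>?W. 2 * w (mu (br x y) u) = w (mu x (rho y u)) - w (mu y (rho x u)))"
    by (auto simp: dual_op_def dual_scale_def fun_eq_iff algebra_simps)
  have sepW: "\<And>v. (\<And>w. w \<in> ?W \<Longrightarrow> w v = 0) \<Longrightarrow> v = 0"
    using sep[OF vV] unfolding dual_space_def by blast
  show ?thesis
  proof
    assume "tp_rep sA mult br dual_scale ?W (\<lambda>x f. - dual_op mu x f) (dual_op rho)"
    then have H3: "\<And>x y u w. w \<in> ?W \<Longrightarrow> 2 * w (rho y (mu x u)) = w (rho (mult x y) u) + w (mu x (rho y u))"
      and H4: "\<And>x y u w. w \<in> ?W \<Longrightarrow> 2 * w (mu (br x y) u) = w (mu x (rho y u)) - w (mu y (rho x u))"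
      using main G3 G4 by blast+
    have C2: "rho (mult x y) u = mu x (rho y u)" for x y u
    proof -
      define a where "a = mu x (rho y u)"
      define r where "r = rho (mult x y) u"
      define c where "c = rho y (mu x u)"
      have e1: "c + c - (r + a) = 0"
      proof (rule sepW)
        fix w assume w: "w \<in> ?W"
        show "w (c + c - (r + a)) = 0"
          using H3[OF w, of y x u] by (simp add: fdiff[OF w] fadd[OF w] a_def r_def c_def algebra_simps)
      qed
      have e2: "a + a = r + c" using r3[of x y u] two unfolding a_def r_def c_def by simp
      have "sV 3 (c - a) = 0"
      proof -
        have "sV 3 (c - a) = (c - a) + (c - a) + (c - a)"
          using V.scale_left_distrib[of 2 1 "c - a"] two[of "c - a"] by simp
        also have "\<dots> = 0" using e1 e2 by (simp add: algebra_simps)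
        finally show ?thesis .
      qed
      then have "c = a" by simp
      with e2 show ?thesis unfolding a_def r_def by simp
    qed
    have C1: "mu (br x y) u = 0" for x y u
    proof -
      define m where "m = mu (br x y) u"
      define p where "p = mu x (rho y u)"
      define q where "q = mu y (rho x u)"
      have e1: "m + m - (p - q) = 0"
      proof (rule sepW)
        fix w assume w: "w \<in> ?W"
        show "w (m + m - (p - q)) = 0"
          using H4[OF w, of x y u] by (simp add: fdiff[OF w] fadd[OF w] m_def p_def q_def algebra_simps)
      qed
      have q': "rho x (mu y u) = q"
        using r3[of y x u] two C2[of y x u] unfolding q_def by (simp add: mcomm[of y x])
      have p': "rho y (mu x u) = p"
        using r3[of x y u] two C2[of x y u] unfolding p_def by simp
      have e2: "m + m = q - p" using r4[of x y u] two q' p' unfolding m_def by simp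
      have e1': "m + m = p - q" using e1 by simp
      have "sV 2 (sV 2 m) = (m + m) + (m + m)" by (simp add: two)
      also have "\<dots> = (p - q) + (q - p)" using e1' e2 by simp
      also have "\<dots> = 0" by simp
      finally have "sV 2 (sV 2 m) = 0" .
      then show ?thesis unfolding m_def by simp
    qed
    show "(\<forall>x y v. mu (br x y) v = 0) \<and> (\<forall>x y v. rho (mult x y) v = mu x (rho y v))"
      using C1 C2 by blast
  next
    assume H: "(\<forall>x y v. mu (br x y) v = 0) \<and> (\<forall>x y v. rho (mult x y) v = mu x (rho y v))"
    have "\<forall>x y u. \<forall>w\<in>?W. 2 * w (rho y (mu x u)) = w (rho (mult x y) u) + w (mu x (rho y u))"
    proof (intro allI ballI)
      fix x y u w assume w: "w \<in> ?W"
      have "rho y (mu x u) = mu x (rho y u)"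
        using r3[of x y u] two H by simp
      then show "2 * w (rho y (mu x u)) = w (rho (mult x y) u) + w (mu x (rho y u))"
        using H by simp
    qed
    moreover have "\<forall>x y u. \<forall>w\<in>?W. 2 * w (mu (br x y) u) = w (mu x (rho y u)) - w (mu y (rho x u))"
    proof (intro allI ballI)
      fix x y u w assume w: "w \<in> ?W"
      have "mu x (rho y u) = mu y (rho x u)"
        using H by (metis mcomm)
      then show "2 * w (mu (br x y) u) = w (mu x (rho y u)) - w (mu y (rho x u))"
        using H f0[OF w] by simp
    qed
    ultimately show "tp_rep sA mult br dual_scale ?W (\<lambda>x f. - dual_op mu x f) (dual_op rho)"
      using main G3 G4 by blast
  qed
qed

lemma adj_rep:
  fixes sA :: "'k::field_char_0 \<Rightarrow> 'a::ab_group_add \<Rightarrow> 'a"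
    and mult br :: "'a \<Rightarrow> 'a \<Rightarrow> 'a"
  assumes tpa: "transposed_poisson sA mult br"
  shows "tp_rep sA mult br sA UNIV mult br"
proof -
  have vA: "vector_space sA" using tpa unfolding transposed_poisson_def by blast
  interpret A: vector_space sA by fact
  have T: "transposed_poisson sA mult br" by (rule tpa)
  note T = T[unfolded transposed_poisson_def]
  have ml: "\<And>c x y z. mult (sA c x + y) z = sA c (mult x z) + mult y z" using T by metis
  have mr: "\<And>c x y z. mult z (sA c x + y) = sA c (mult z x) + mult z y" using T by metis
  have bl: "\<And>c x y z. br (sA c x + y) z = sA c (br x z) + br y z" using T by metis
  have brr: "\<And>c x y z. br z (sA c x + y) = sA c (br z x) + br z y" using T by metis
  have mc: "\<And>x y. mult x y = mult y x" using T by metis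
  have ma: "\<And>x y z. mult (mult x y) z = mult x (mult y z)" using T by metis
  have bxx: "\<And>x. br x x = 0" using T by metis
  have jac: "\<And>x y z. br x (br y z) + br y (br z x) + br z (br x y) = 0" using T by metis
  have cp: "\<And>x y z. sA 2 (mult z (br x y)) = br (mult z x) y + br x (mult z y)" using T by metis
  have badd1: "\<And>x y z. br (x + y) z = br x z + br y z" using bl[where c=1] by simp
  have badd2: "\<And>x y z. br z (x + y) = br z x + br z y" using brr[where c=1] by simp
  have anti: "\<And>x y. br x y = - br y x"
  proof -
    fix x y
    have "0 = br (x + y) (x + y)" by (simp add: bxx)
    also have "\<dots> = br x y + br y x" by (subst badd1) (simp add: badd2 bxx)
    finally show "br x y = - br y x" by (metis eq_neg_iff_add_eq_0)
  qed
  have R2: "\<And>x y w. br (br x y) w = br x (br y w) - br y (br x w)"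
  proof -
    fix x y w
    have "br (br x y) w = - br w (br x y)" by (rule anti)
    also have "\<dots> = br x (br y w) + br y (br w x)" using jac[of x y w]
      by (metis neg_eq_iff_add_eq_0 add.commute)
    also have "br y (br w x) = - br y (br x w)"
    proof -
      have z: "br y 0 = 0" using badd2[of y 0 0] by simp
      have "br y (br x w) + br y (- br x w) = 0" using badd2[of y "br x w" "- br x w"] z by simp
      then show ?thesis using anti[of w x] by (metis eq_neg_iff_add_eq_0 add.commute)
    qed
    finally show "br (br x y) w = br x (br y w) - br y (br x w)" by simp
  qed
  have R4: "\<And>x y w. sA 2 (mult (br x y) w) = br x (mult y w) - br y (mult x w)"
  proof -
    fix x y w
    have "sA 2 (mult (br x y) w) = br (mult w x) y + br x (mult w y)" using cp[where z=w and x=x and y=y] by (simp add: mc)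
    also have "br (mult w x) y = - br y (mult x w)" using anti[of "mult w x" y] mc[of w x] by simp
    finally show "sA 2 (mult (br x y) w) = br x (mult y w) - br y (mult x w)" by (simp add: mc)
  qed
  show ?thesis unfolding tp_rep_def
    apply (intro conjI)
    subgoal by (rule vA)
    subgoal by (rule A.subspace_UNIV)
    subgoal by simp
    subgoal using mr by blast
    subgoal using brr by blast
    subgoal using ml by blast
    subgoal using bl by blast
    subgoal using ma by blast
    subgoal using R2 by blast
    subgoal using cp by blast
    subgoal using R4 by blast
    done
qed

theorem mainTheorem16:
  fixes sA :: "'k::field_char_0 \<Rightarrow> 'a::ab_group_add \<Rightarrow> 'a"
    and mult br :: "'a \<Rightarrow> 'a \<Rightarrow> 'a"
    and sV :: "'k \<Rightarrow> 'v::ab_group_add \<Rightarrow> 'v"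
    and mu rho :: "'a \<Rightarrow> 'v \<Rightarrow> 'v"
  assumes tpa: "transposed_poisson sA mult br"
    and finA: "\<exists>B. finite_dimensional_vector_space sA B"
    and finV: "\<exists>B. finite_dimensional_vector_space sV B"
    and rep: "tp_rep sA mult br sV UNIV mu rho"
  shows "(tp_rep sA mult br dual_scale (dual_space sV) (\<lambda>x f. - dual_op mu x f) (dual_op rho)
            \<longleftrightarrow> (\<forall>x y v. mu (br x y) v = 0) \<and> (\<forall>x y v. rho (mult x y) v = mu x (rho y v)))
         \<and> (tp_rep sA mult br dual_scale (dual_space sA) (\<lambda>x f. - dual_op mult x f) (dual_op br)
            \<longleftrightarrow> (\<forall>x y z. br x (mult y z) = 0 \<and> mult x (br y z) = 0))"
proof -
  have T: "transposed_poisson sA mult br" by (rule tpa)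
  note T = T[unfolded transposed_poisson_def]
  have mc: "\<And>x y. mult x y = mult y x" using T by metis
  have bxx: "\<And>x. br x x = 0" using T by metis
  have brr: "\<And>c x y z. br z (sA c x + y) = sA c (br z x) + br z y" using T by metis
  have bl: "\<And>c x y z. br (sA c x + y) z = sA c (br x z) + br y z" using T by metis
  have vA: "vector_space sA" using tpa unfolding transposed_poisson_def by blast
  interpret A: vector_space sA by fact
  have badd1: "\<And>x y z. br (x + y) z = br x z + br y z" using bl[where c=1] by simp
  have badd2: "\<And>x y z. br z (x + y) = br z x + br z y" using brr[where c=1] by simp
  have anti: "\<And>x y. br x y = - br y x"
  proof -
    fix x y
    have "0 = br (x + y) (x + y)" by (simp add: bxx)
    also have "\<dots> = br x y + br y x" by (subst badd1) (simp add: badd2 bxx)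
    finally show "br x y = - br y x" by (metis eq_neg_iff_add_eq_0)
  qed
  have eq: "((\<forall>x y v. mult (br x y) v = 0) \<and> (\<forall>x y v. br (mult x y) v = mult x (br y v)))
     \<longleftrightarrow> (\<forall>x y z. br x (mult y z) = 0 \<and> mult x (br y z) = 0)"
  proof
    assume H: "(\<forall>x y v. mult (br x y) v = 0) \<and> (\<forall>x y v. br (mult x y) v = mult x (br y v))"
    show "\<forall>x y z. br x (mult y z) = 0 \<and> mult x (br y z) = 0"
    proof (intro allI conjI)
      fix x y z
      show "mult x (br y z) = 0" using H mc by metis
      have "br x (mult y z) = - br (mult y z) x" by (rule anti)
      also have "\<dots> = - mult y (br z x)" using H by simp
      also have "\<dots> = 0" using H mc by (metis neg_equal_0_iff_equal)
      finally show "br x (mult y z) = 0" .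
    qed
  next
    assume H: "\<forall>x y z. br x (mult y z) = 0 \<and> mult x (br y z) = 0"
    show "(\<forall>x y v. mult (br x y) v = 0) \<and> (\<forall>x y v. br (mult x y) v = mult x (br y v))"
    proof (intro allI conjI)
      fix x y v
      show "mult (br x y) v = 0" using H mc by metis
      have "br (mult x y) v = - br v (mult x y)" by (rule anti)
      then show "br (mult x y) v = mult x (br y v)" using H by simp
    qed
  qed
  show ?thesis
    using part1[OF tpa rep] part1[OF tpa adj_rep[OF tpa]] eq by simp
qed

end
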